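(* Let $1\le p<\infty$ and $N\ge1$. The distribution of $W_p(\mu_A,\lambda_{\mathbb{T}})$, where $A$ is Haar-distributed, is the same for $G=\mathrm{U}(N)$ and $G=\mathrm{SU}(N)$. Further, the distribution of $W_p(\mu_A,\lambda_{\mathbb{T}})$ is the same for $G=\mathrm{O}(2N+1)$ and $G=\mathrm{SO}(2N+1)$.
   Context: $A\in G$ is a random matrix distributed according to the normalized Haar measure on $G$. $\mathbb{T}=\{z\in\mathbb{C}:|z|=1\}$ with arc length metric $d(z,w)=\min\{\arg(z\bar w),2\pi-\arg(z\bar w)\}$, $\arg\in[0,2\pi)$; $\lambda_{\mathbb{T}}$ is the uniform probability measure on $\mathbb{T}$; $W_p(\mu,\nu)=\inf_\vartheta\left(\int d(z,w)^p\,\mathrm{d}\vartheta\right)^{1/p}$ over couplings $\vartheta$ of $\mu$ and $\nu$. For $G=\mathrm{U}(N),\mathrm{SU}(N)$, $\mu_A=\frac1N\sum_\lambda\delta_\lambda$ over all $N$ eigenvalues (with multiplicity). For $G=\mathrm{O}(2N+1),\mathrm{SO}(2N+1)$, $\mu_A=\frac{1}{2N}\sum_\lambda\delta_\lambda$ over the $2N$ eigenvalues remaining after removing one copy of the eigenvalue $\det A$. *)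

theory Defs
  imports "HOL-Probability.Probability"
begin

definition conj_transpose :: "complex^'n^'n \<Rightarrow> complex^'n^'n" where
  "conj_transpose A = (\<chi> i j. cnj (A $ j $ i))"

definition unitary_group :: "(complex^'n^'n) set" where
  "unitary_group = {A. A ** conj_transpose A = mat 1}"

definition special_unitary_group :: "(complex^'n^'n) set" where
  "special_unitary_group = {A. A ** conj_transpose A = mat 1 \<and> det A = 1}"

definition orthogonal_group :: "(real^'n^'n) set" where
  "orthogonal_group = {A. transpose A ** A = mat 1}"

definition special_orthogonal_group :: "(real^'n^'n) set" where
  "special_orthogonal_group = {A. transpose A ** A = mat 1 \<and> det A = 1}"

definition haar_measure_on :: "('a::real_normed_field^'n^'n) set \<Rightarrow> ('a^'n^'n) measure \<Rightarrow> bool" where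
  "haar_measure_on G M \<longleftrightarrow>
     space M = G \<and> sets M = sets (restrict_space borel G) \<and> prob_space M \<and>
     (\<forall>g\<in>G. \<forall>S\<in>sets M. emeasure M ((\<lambda>A. g ** A) -` S \<inter> space M) = emeasure M S)"

definition eigen_mset :: "complex^'n^'n \<Rightarrow> complex multiset" where
  "eigen_mset A = (THE M. \<forall>x. det (mat x - A) = prod_mset (image_mset (\<lambda>l. x - l) M))"

definition complexify :: "real^'n^'n \<Rightarrow> complex^'n^'n" where
  "complexify A = (\<chi> i j. complex_of_real (A $ i $ j))"

definition spec_measure_U :: "complex^'n^'n \<Rightarrow> complex measure" where
  "spec_measure_U A = measure_pmf (pmf_of_multiset (eigen_mset A))"

definition spec_measure_O :: "real^'n^'n \<Rightarrow> complex measure" where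
  "spec_measure_O A = measure_pmf (pmf_of_multiset
      (eigen_mset (complexify A) - {# complex_of_real (det A) #}))"

definition arg02pi :: "complex \<Rightarrow> real" where
  "arg02pi z = (if Arg z < 0 then Arg z + 2 * pi else Arg z)"

definition circ_dist :: "complex \<Rightarrow> complex \<Rightarrow> real" where
  "circ_dist z w = min (arg02pi (z * cnj w)) (2 * pi - arg02pi (z * cnj w))"

definition lambda_T :: "complex measure" where
  "lambda_T = distr (uniform_measure lborel {0..<2 * pi}) borel (\<lambda>t. cis t)"

definition couplings :: "complex measure \<Rightarrow> complex measure \<Rightarrow> (complex \<times> complex) measure set" where
  "couplings \<mu> \<nu> = {\<theta>. sets \<theta> = sets (borel :: (complex \<times> complex) measure) \<and> prob_space \<theta> \<and>
      (\<forall>S\<in>sets (borel :: complex measure).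
         emeasure \<theta> (S \<times> UNIV) = emeasure \<mu> S \<and> emeasure \<theta> (UNIV \<times> S) = emeasure \<nu> S)}"

definition wasserstein :: "real \<Rightarrow> complex measure \<Rightarrow> complex measure \<Rightarrow> real" where
  "wasserstein p \<mu> \<nu> =
     (enn2real (INF \<theta>\<in>couplings \<mu> \<nu>. \<integral>\<^sup>+ zw. ennreal (circ_dist (fst zw) (snd zw) powr p) \<partial>\<theta>))
       powr (1 / p)"

end

theory Submission
  imports Defs "HOL-Computational_Algebra.Fundamental_Theorem_Algebra"
begin


lemma cont_matmul: "continuous_on UNIV (\<lambda>p::('a::real_normed_field^'n^'n) \<times> ('a^'n^'n). fst p ** snd p)"
  unfolding matrix_matrix_mult_def
  by (intro continuous_intros)

lemma haar_unique_aux: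
  fixes G :: "('a::{real_normed_field,euclidean_space}^'n^'n) set" and inv :: "'a^'n^'n \<Rightarrow> 'a^'n^'n"
  assumes mulG: "\<And>a b. a\<in>G \<Longrightarrow> b\<in>G \<Longrightarrow> a ** b \<in> G"
    and invG: "\<And>a. a\<in>G \<Longrightarrow> inv a \<in> G"
    and inv_mul: "\<And>a b. inv (a ** b) = inv b ** inv a"
    and inv_inv: "\<And>a. inv (inv a) = a"
    and cont: "continuous_on UNIV inv"
    and hmu: "haar_measure_on G \<mu>" and hnu: "haar_measure_on G \<nu>"
    and S: "S \<in> sets \<nu>"
  shows "emeasure \<nu> S = emeasure \<mu> {z\<in>G. inv z \<in> S}"
proof -
  have smu: "space \<mu> = G" "sets \<mu> = sets (restrict_space borel G)" "prob_space \<mu>"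
    and imu: "\<And>g S. g\<in>G \<Longrightarrow> S\<in>sets \<mu> \<Longrightarrow> emeasure \<mu> ((\<lambda>A. g ** A) -` S \<inter> space \<mu>) = emeasure \<mu> S"
    using hmu unfolding haar_measure_on_def by auto
  have snu: "space \<nu> = G" "sets \<nu> = sets (restrict_space borel G)" "prob_space \<nu>"
    and inu: "\<And>g S. g\<in>G \<Longrightarrow> S\<in>sets \<nu> \<Longrightarrow> emeasure \<nu> ((\<lambda>A. g ** A) -` S \<inter> space \<nu>) = emeasure \<nu> S"
    using hnu unfolding haar_measure_on_def by auto
  interpret mu: prob_space \<mu> by fact
  interpret nu: prob_space \<nu> by fact
  interpret pair_sigma_finite \<nu> \<mu> ..
  have measR: "\<And>M. sets M = sets (restrict_space borel G) \<Longrightarrow> (\<lambda>x. x) \<in> measurable M borel"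
    by (metis measurable_cong_sets measurable_ident_sets measurable_restrict_space1)
  have minv: "inv \<in> measurable (restrict_space borel G) (restrict_space borel G)"
    by (rule measurable_restrict_space3) (auto intro: invG borel_measurable_continuous_onI[OF cont] measurable_restrict_space1)
  define Si where "Si = {z\<in>G. inv z \<in> S}"
  have Si: "Si \<in> sets \<mu>"
  proof -
    have "Si = inv -` S \<inter> space (restrict_space borel G)" unfolding Si_def by (auto simp: space_restrict_space)
    also have "\<dots> \<in> sets (restrict_space borel G)" using minv S snu by (auto intro: measurable_sets)
    finally show ?thesis using smu by simp
  qed
  define X where "X = {p \<in> G \<times> G. inv (snd p) ** fst p \<in> S}"
  have X: "X \<in> sets (\<nu> \<Otimes>\<^sub>M \<mu>)"
  proof -
    have h: "(\<lambda>p. inv (snd p) ** fst p) \<in> borel_measurable (\<nu> \<Otimes>\<^sub>M \<mu>)"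
    proof -
      have "(\<lambda>p. (inv (snd p), fst p)) \<in> borel_measurable (\<nu> \<Otimes>\<^sub>M \<mu>)"
        apply (rule borel_measurable_Pair)
        apply (rule measurable_compose[OF measurable_snd])
        apply (rule measurable_compose[OF measR[OF smu(2)]])
        apply (rule borel_measurable_continuous_onI[OF cont])
        apply (rule measurable_compose[OF measurable_fst])
        apply (rule measR[OF snu(2)])
        done
      from borel_measurable_continuous_on[OF cont_matmul this] show ?thesis by simp
    qed
    obtain B where B: "B \<in> sets borel" "S = G \<inter> B" using S snu by (auto simp: sets_restrict_space)
    have "X = (\<lambda>p. inv (snd p) ** fst p) -` B \<inter> space (\<nu> \<Otimes>\<^sub>M \<mu>)"
      unfolding X_def B(2) using smu(1) snu(1) mulG invG by (auto simp: space_pair_measure)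
    also have "\<dots> \<in> sets (\<nu> \<Otimes>\<^sub>M \<mu>)" using h B(1) by (rule measurable_sets)
    finally show ?thesis .
  qed
  have "emeasure (\<nu> \<Otimes>\<^sub>M \<mu>) X = (\<integral>\<^sup>+x. emeasure \<mu> (Pair x -` X) \<partial>\<nu>)"
    by (rule mu.emeasure_pair_measure_alt[OF X])
  also have "\<dots> = (\<integral>\<^sup>+x. emeasure \<mu> Si \<partial>\<nu>)"
  proof (rule nn_integral_cong)
    fix x assume x: "x \<in> space \<nu>"
    have "Pair x -` X = (\<lambda>A. inv x ** A) -` Si \<inter> space \<mu>"
    proof -
      have "inv y ** x \<in> S \<longleftrightarrow> inv (inv x ** y) \<in> S" for y
        by (simp add: inv_mul inv_inv)
      moreover have "x \<in> G" using x snu(1) by simp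
      ultimately show ?thesis unfolding X_def Si_def smu(1) by (auto intro: mulG invG)
    qed
    then show "emeasure \<mu> (Pair x -` X) = emeasure \<mu> Si"
      using imu[OF invG Si] x snu by simp
  qed
  also have "\<dots> = emeasure \<mu> Si" by (simp add: nu.emeasure_space_1)
  finally have 1: "emeasure (\<nu> \<Otimes>\<^sub>M \<mu>) X = emeasure \<mu> Si" .
  have "emeasure (\<nu> \<Otimes>\<^sub>M \<mu>) X = (\<integral>\<^sup>+y. emeasure \<nu> ((\<lambda>x. (x, y)) -` X) \<partial>\<mu>)"
    by (rule emeasure_pair_measure_alt2[OF X])
  also have "\<dots> = (\<integral>\<^sup>+y. emeasure \<nu> S \<partial>\<mu>)"
  proof (rule nn_integral_cong)
    fix y assume y: "y \<in> space \<mu>"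
    have "(\<lambda>x. (x, y)) -` X = (\<lambda>A. inv y ** A) -` S \<inter> space \<nu>"
      using y unfolding X_def smu(1) snu(1) by auto
    then show "emeasure \<nu> ((\<lambda>x. (x, y)) -` X) = emeasure \<nu> S"
      using inu[OF invG S] y smu by simp
  qed
  also have "\<dots> = emeasure \<nu> S" by (simp add: mu.emeasure_space_1)
  finally show ?thesis using 1 Si_def by simp
qed



lemma haar_unique:
  fixes G :: "('a::{real_normed_field,euclidean_space}^'n^'n) set" and inv :: "'a^'n^'n \<Rightarrow> 'a^'n^'n"
  assumes mulG: "\<And>a b. a\<in>G \<Longrightarrow> b\<in>G \<Longrightarrow> a ** b \<in> G"
    and invG: "\<And>a. a\<in>G \<Longrightarrow> inv a \<in> G"
    and inv_mul: "\<And>a b. inv (a ** b) = inv b ** inv a"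
    and inv_inv: "\<And>a. inv (inv a) = a"
    and cont: "continuous_on UNIV inv"
    and hmu: "haar_measure_on G \<mu>" and hnu: "haar_measure_on G \<nu>"
  shows "\<nu> = \<mu>"
proof (rule measure_eqI)
  show ss: "sets \<nu> = sets \<mu>" using hmu hnu unfolding haar_measure_on_def by simp
  fix S assume S: "S \<in> sets \<nu>"
  have "emeasure \<nu> S = emeasure \<mu> {z\<in>G. inv z \<in> S}"
    by (rule haar_unique_aux[OF assms S])
  moreover have "emeasure \<mu> S = emeasure \<mu> {z\<in>G. inv z \<in> S}"
    using haar_unique_aux[OF mulG invG inv_mul inv_inv cont hmu hmu, of S] S ss by simp
  ultimately show "emeasure \<nu> S = emeasure \<mu> S" by simp
qed

lemma haar_transfer:
  fixes H G :: "('a::{real_normed_field,euclidean_space}^'n^'n) set"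
    and \<pi> :: "'a^'n^'n \<Rightarrow> 'a^'n^'n" and f :: "'a^'n^'n \<Rightarrow> real"
  assumes hH: "haar_measure_on H MH" and hG: "haar_measure_on G MG"
    and uniq: "\<And>M. haar_measure_on G M \<Longrightarrow> M = MG"
    and GH: "G \<subseteq> H" and mulG: "\<And>a b. a\<in>G \<Longrightarrow> b\<in>G \<Longrightarrow> a ** b \<in> G" and mulH: "\<And>a b. a\<in>H \<Longrightarrow> b\<in>H \<Longrightarrow> a ** b \<in> H"
    and pim: "\<pi> \<in> measurable (restrict_space borel H) (restrict_space borel G)"
    and piG: "\<And>A. A \<in> G \<Longrightarrow> \<pi> A = A"
    and pieq: "\<And>g A. g\<in>G \<Longrightarrow> A\<in>H \<Longrightarrow> \<pi> (g ** A) = g ** \<pi> A"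
    and fpi: "\<And>A. A\<in>H \<Longrightarrow> f (\<pi> A) = f A"
  shows "distr MH borel f = distr MG borel f"
proof -
  have sH: "space MH = H" "sets MH = sets (restrict_space borel H)" "prob_space MH"
    and iH: "\<And>g S. g\<in>H \<Longrightarrow> S\<in>sets MH \<Longrightarrow> emeasure MH ((\<lambda>A. g ** A) -` S \<inter> space MH) = emeasure MH S"
    using hH unfolding haar_measure_on_def by auto
  have sG: "space MG = G" "sets MG = sets (restrict_space borel G)" "prob_space MG"
    using hG unfolding haar_measure_on_def by auto
  have pim': "\<pi> \<in> measurable MH (restrict_space borel G)"
    using pim measurable_cong_sets[OF sH(2) refl, of "restrict_space borel G"] by simp
  have piH: "\<And>A. A \<in> H \<Longrightarrow> \<pi> A \<in> G"
    using measurable_space[OF pim] by (simp add: space_restrict_space)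
  define D where "D = distr MH (restrict_space borel G) \<pi>"
  have "haar_measure_on G D"
    unfolding haar_measure_on_def
  proof (intro conjI ballI)
    show "space D = G" unfolding D_def by (simp add: space_restrict_space)
    show "sets D = sets (restrict_space borel G)" unfolding D_def by simp
    show "prob_space D" unfolding D_def
      by (rule prob_space.prob_space_distr[OF sH(3) pim'])
    fix g S assume g: "g \<in> G" and S: "S \<in> sets D"
    have S': "S \<in> sets (restrict_space borel G)" using S unfolding D_def by simp
    have T: "(\<lambda>A. g ** A) -` S \<inter> space D \<in> sets (restrict_space borel G)"
    proof -
      have m: "(\<lambda>A. g ** A) \<in> measurable (restrict_space borel G) (restrict_space borel G)"
      proof (rule measurable_restrict_space3)
        show "(\<lambda>A. g ** A) \<in> borel_measurable borel"
          apply (rule borel_measurable_continuous_onI)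
          unfolding matrix_matrix_mult_def by (intro continuous_intros)
        show "(\<lambda>A. g ** A) \<in> G \<rightarrow> G"
          using g mulG by auto
      qed
      have "(\<lambda>A. g ** A) -` S \<inter> space D = (\<lambda>A. g ** A) -` S \<inter> space (restrict_space borel G)"
        unfolding D_def by (simp add: space_restrict_space)
      also have "\<dots> \<in> sets (restrict_space borel G)" using m S' by (rule measurable_sets)
      finally show ?thesis .
    qed
    have "emeasure D ((\<lambda>A. g ** A) -` S \<inter> space D)
        = emeasure MH (\<pi> -` ((\<lambda>A. g ** A) -` S \<inter> space D) \<inter> space MH)"
      unfolding D_def by (rule emeasure_distr[OF pim']) (use T[unfolded D_def] in simp)
    also have "\<pi> -` ((\<lambda>A. g ** A) -` S \<inter> space D) \<inter> space MH
        = (\<lambda>A. g ** A) -` (\<pi> -` S \<inter> space MH) \<inter> space MH"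
    proof -
      have "space D = G" unfolding D_def by (simp add: space_restrict_space)
      moreover have "(\<pi> A \<in> G \<and> g ** \<pi> A \<in> S) \<longleftrightarrow> (g ** A \<in> H \<and> \<pi> (g ** A) \<in> S)" if "A \<in> H" for A
        using that g GH piH[OF that] mulH[of g A] pieq[OF g that] by auto
      ultimately show ?thesis unfolding sH(1) by auto
    qed
    also have "emeasure MH \<dots> = emeasure MH (\<pi> -` S \<inter> space MH)"
      by (rule iH) (use g GH measurable_sets[OF pim' S'] in auto)
    also have "\<dots> = emeasure D S"
      unfolding D_def by (rule emeasure_distr[OF pim', symmetric]) (use S' in simp)
    finally show "emeasure D ((\<lambda>A. g ** A) -` S \<inter> space D) = emeasure D S" .
  qed
  then have DG: "D = MG" by (rule uniq)
  have key: "emeasure MH (f -` S \<inter> space MH) = emeasure MG (f -` S \<inter> space MG)" for S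
  proof -
    define X where "X = f -` S \<inter> G"
    have eq: "f -` S \<inter> space MH = \<pi> -` X \<inter> space MH"
    proof -
      have "f A \<in> S \<longleftrightarrow> (\<pi> A \<in> G \<and> f (\<pi> A) \<in> S)" if "A \<in> H" for A
        using piH[OF that] fpi[OF that] by simp
      then show ?thesis unfolding X_def sH(1) by auto
    qed
    show ?thesis
    proof (cases "X \<in> sets MG")
      case True
      have "emeasure MG X = emeasure D X" using DG by simp
      also have "\<dots> = emeasure MH (\<pi> -` X \<inter> space MH)"
        unfolding D_def by (rule emeasure_distr[OF pim']) (use True sG in simp)
      finally show ?thesis using eq X_def sG(1) by simp
    next
      case False
      have "\<pi> -` X \<inter> space MH \<notin> sets MH"
      proof
        assume "\<pi> -` X \<inter> space MH \<in> sets MH"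
        then obtain B where B: "B \<in> sets borel" "\<pi> -` X \<inter> H = H \<inter> B"
          using sH by (auto simp: sets_restrict_space)
        have "X = G \<inter> B"
        proof -
          have "X \<subseteq> G" unfolding X_def by auto
          moreover have "A \<in> X \<longleftrightarrow> A \<in> B" if "A \<in> G" for A
          proof -
            have "A \<in> H" using GH that by auto
            then have "A \<in> \<pi> -` X \<inter> H \<longleftrightarrow> A \<in> H \<inter> B" using B(2) by simp
            then show ?thesis using piG[OF that] \<open>A \<in> H\<close> by simp
          qed
          ultimately show ?thesis by blast
        qed
        then have "X \<in> sets MG" using B(1) sG by (auto simp: sets_restrict_space)
        with False show False by simp
      qed
      then show ?thesis using False eq X_def sG(1)
        by (simp add: emeasure_notin_sets)
    qed
  qed
  show ?thesis
    unfolding distr_def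
    by (rule measure_of_eq) (auto simp: key sets.space_closed)
qed



definition cpQ :: "complex^'n^'n \<Rightarrow> 'n \<Rightarrow> 'n \<Rightarrow> complex poly" where
  "cpQ A i j = (if i = j then [:- A$i$j, 1:] else [:- A$i$j:])"

definition charP :: "complex^'n^'n \<Rightarrow> complex poly" where
  "charP A = (\<Sum>\<sigma>\<in>{\<sigma>. \<sigma> permutes (UNIV::'n set)}. of_int (sign \<sigma>) * (\<Prod>i\<in>UNIV. cpQ A i (\<sigma> i)))"

lemma poly_cpQ: "poly (cpQ A i j) x = (mat x - A)$i$j"
  unfolding cpQ_def mat_def by simp

lemma poly_charP: "poly (charP A) x = det (mat x - A)"
  unfolding charP_def det_def poly_sum
  by (intro sum.cong refl) (simp add: poly_prod poly_cpQ of_int_poly)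

lemma degree_cpQ: "degree (cpQ A i j) \<le> (if i = j then 1 else 0)"
  unfolding cpQ_def by auto

lemma charP_coeff:
  "degree (charP (A::complex^'n^'n)) \<le> CARD('n) \<and> coeff (charP A) (CARD('n)) = 1"
proof -
  let ?P = "{\<sigma>. \<sigma> permutes (UNIV::'n set)}"
  let ?t = "\<lambda>\<sigma>. of_int (sign \<sigma>) * (\<Prod>i\<in>UNIV. cpQ A i (\<sigma> i))"
  have degle: "degree (\<Prod>i\<in>UNIV. cpQ A i (\<sigma> i)) \<le> (\<Sum>i\<in>UNIV. (if \<sigma> i = i then 1 else 0))" for \<sigma>
  proof -
    have "degree (\<Prod>i\<in>UNIV. cpQ A i (\<sigma> i)) \<le> (\<Sum>i\<in>UNIV. degree (cpQ A i (\<sigma> i)))"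
      using degree_prod_sum_le[of UNIV "\<lambda>i. cpQ A i (\<sigma> i)"] by (simp add: o_def)
    also have "\<dots> \<le> (\<Sum>i\<in>UNIV. (if \<sigma> i = i then 1 else 0))"
      by (intro sum_mono) (auto simp: cpQ_def)
    finally show ?thesis .
  qed
  have degt: "degree (?t \<sigma>) \<le> (\<Sum>i\<in>UNIV. (if \<sigma> i = i then 1 else 0))" for \<sigma>
    using degle[of \<sigma>] degree_mult_le[of "of_int (sign \<sigma>)" "\<Prod>i\<in>UNIV. cpQ A i (\<sigma> i)"]
    by (simp add: of_int_poly)
  have sumle: "(\<Sum>i\<in>(UNIV::'n set). (if \<sigma> i = i then 1 else 0)) \<le> CARD('n)" for \<sigma> :: "'n \<Rightarrow> 'n"
    using sum_mono[of UNIV "\<lambda>i. (if \<sigma> i = i then 1 else 0)" "\<lambda>_. 1::nat"] by simp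
  have sumlt: "(\<Sum>i\<in>(UNIV::'n set). (if \<sigma> i = i then 1 else 0)) < CARD('n)" if ne: "\<sigma> \<noteq> id" for \<sigma> :: "'n \<Rightarrow> 'n"
  proof -
    obtain k where k: "\<sigma> k \<noteq> k" using ne by (metis eq_id_iff)
    have "(\<Sum>i\<in>(UNIV::'n set). (if \<sigma> i = i then 1 else 0::nat)) < (\<Sum>i\<in>(UNIV::'n set). 1)"
      by (rule sum_strict_mono_ex1) (use k in auto)
    then show ?thesis by simp
  qed
  have "degree (charP A) \<le> CARD('n)"
    unfolding charP_def by (rule degree_sum_le) (simp, rule le_trans[OF degt sumle])
  moreover have "coeff (charP A) (CARD('n)) = 1"
  proof -
    have idP: "id \<in> ?P" by (simp add: permutes_id)
    have "coeff (charP A) (CARD('n)) = (\<Sum>\<sigma>\<in>?P. coeff (?t \<sigma>) (CARD('n)))"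
      unfolding charP_def by (simp add: coeff_sum)
    also have "\<dots> = coeff (?t id) (CARD('n)) + (\<Sum>\<sigma>\<in>?P - {id}. coeff (?t \<sigma>) (CARD('n)))"
      by (rule sum.remove[OF _ idP]) simp
    also have "(\<Sum>\<sigma>\<in>?P - {id}. coeff (?t \<sigma>) (CARD('n))) = 0"
    proof (rule sum.neutral, rule ballI)
      fix \<sigma> assume "\<sigma> \<in> ?P - {id}"
      then have "degree (?t \<sigma>) < CARD('n)" using degt[of \<sigma>] sumlt[of \<sigma>] by auto
      then show "coeff (?t \<sigma>) (CARD('n)) = 0" by (simp add: coeff_eq_0)
    qed
    also have "coeff (?t id) (CARD('n)) = 1"
    proof -
      have "?t id = (\<Prod>i\<in>UNIV. [:- A$i$i, 1:])" by (simp add: cpQ_def)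
      moreover have "degree (\<Prod>i\<in>(UNIV::'n set). [:- A$i$i, 1:]) = CARD('n)"
        by (subst degree_prod_eq_sum_degree) auto
      moreover have "lead_coeff (\<Prod>i\<in>(UNIV::'n set). [:- A$i$i, 1:]) = 1"
        by (simp add: lead_coeff_prod)
      ultimately show ?thesis by metis
    qed
    finally show ?thesis by simp
  qed
  ultimately show ?thesis by blast
qed

lemma mset_prod_unique:
  fixes M M' :: "complex multiset"
  assumes "(\<Prod>l\<in>#M. [:-l,1:]) = (\<Prod>l\<in>#M'. [:-l,1:])"
  shows "M = M'"
  using assms
proof (induction M arbitrary: M')
  case empty
  show ?case
  proof (rule ccontr)
    assume "{#} \<noteq> M'"
    then obtain a where a: "a \<in># M'" by (metis multiset_nonemptyE)
    have "poly (\<Prod>l\<in>#M'. [:-l,1:]) a = 0"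
      using a by (auto simp: poly_prod_mset prod_mset_zero_iff)
    then show False using empty by simp
  qed
next
  case (add a M)
  have "poly (\<Prod>l\<in>#add_mset a M. [:-l,1:]) a = 0" by (simp add: poly_prod_mset)
  moreover have "poly (\<Prod>l\<in>#M'. [:-l,1:]) a = poly (\<Prod>l\<in>#add_mset a M. [:-l,1:]) a"
    by (simp only: add.prems)
  ultimately have "poly (\<Prod>l\<in>#M'. [:-l,1:]) a = 0" by simp
  then have "a \<in># M'" by (auto simp: poly_prod_mset prod_mset_zero_iff)
  then obtain M1 where M1: "M' = add_mset a M1" by (metis mset_add)
  have "[:-a,1:] * (\<Prod>l\<in>#M. [:-l,1:]) = [:-a,1:] * (\<Prod>l\<in>#M1. [:-l,1:])"
    using add.prems M1 by simp
  then have "(\<Prod>l\<in>#M. [:-l,1:]) = (\<Prod>l\<in>#M1. [:-l,1:])"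
    by (subst (asm) mult_left_cancel) auto
  then show ?case using add.IH M1 by simp
qed

lemma mset_fun_unique:
  fixes M M' :: "complex multiset"
  assumes "\<And>x. (\<Prod>l\<in>#M. x - l) = (\<Prod>l\<in>#M'. x - l)"
  shows "M = M'"
proof (rule mset_prod_unique)
  show "(\<Prod>l\<in>#M. [:-l,1:]) = (\<Prod>l\<in>#M'. [:-l,1:])"
    by (rule poly_eq_poly_eq_iff[THEN iffD1]) (use assms in \<open>auto simp: poly_prod_mset fun_eq_iff\<close>)
qed

lemma eigen_exists:
  "\<exists>M. size M = CARD('n) \<and> (\<forall>x. det (mat x - (A::complex^'n^'n)) = (\<Prod>l\<in>#M. x - l))"
proof -
  have c: "degree (charP A) \<le> CARD('n)" "coeff (charP A) (CARD('n)) = 1" using charP_coeff by blast+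
  have d: "degree (charP A) = CARD('n)"
    using c by (metis le_degree le_antisym one_neq_zero)
  then have lc: "lead_coeff (charP A) = 1" using c by simp
  then have nz: "charP A \<noteq> 0" by auto
  obtain M where M: "size M = degree (charP A)" "charP A = smult (lead_coeff (charP A)) (\<Prod>x\<in>#M. [:-x, 1:])"
    using alg_closed_imp_factorization[OF nz] by blast
  have "det (mat x - A) = (\<Prod>l\<in>#M. x - l)" for x
    using arg_cong[OF M(2), of "\<lambda>p. poly p x"] lc by (simp add: poly_charP poly_prod_mset)
  then show ?thesis using M(1) d by auto
qed

lemma eigen_mset_eq:
  assumes "\<And>x. det (mat x - (A::complex^'n^'n)) = (\<Prod>l\<in>#M. x - l)"
  shows "eigen_mset A = M"
  unfolding eigen_mset_def
proof (rule the_equality)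
  show "\<forall>x. det (mat x - A) = (\<Prod>l\<in>#M. x - l)" using assms by blast
  fix M' assume "\<forall>x. det (mat x - A) = (\<Prod>l\<in>#M'. x - l)"
  then show "M' = M" using assms mset_fun_unique by metis
qed

lemma eigen_mset_props:
  "size (eigen_mset (A::complex^'n^'n)) = CARD('n) \<and> (\<forall>x. det (mat x - A) = (\<Prod>l\<in>#eigen_mset A. x - l))"
proof -
  obtain M where M: "size M = CARD('n)" "\<forall>x. det (mat x - A) = (\<Prod>l\<in>#M. x - l)"
    using eigen_exists by blast
  then have "eigen_mset A = M" using eigen_mset_eq by blast
  then show ?thesis using M by simp
qed

definition smat :: "complex \<Rightarrow> complex^'n^'n \<Rightarrow> complex^'n^'n" where
  "smat c A = (\<chi> i j. c * A$i$j)"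

lemma det_smat: "det (smat c (A::complex^'n^'n)) = c ^ CARD('n) * det A"
  unfolding det_def smat_def
  by (simp add: sum_distrib_left prod.distrib mult.left_commute)

lemma prod_mset_cmult: "(\<Prod>l\<in>#M. (c::complex) * f l) = c ^ size M * (\<Prod>l\<in>#M. f l)"
  by (induction M) (auto simp: algebra_simps)

lemma eigen_mset_smat:
  assumes c: "c \<noteq> 0"
  shows "eigen_mset (smat c (A::complex^'n^'n)) = image_mset (\<lambda>l. c * l) (eigen_mset A)"
proof (rule eigen_mset_eq)
  fix x
  have "mat x - smat c A = smat c (mat (x / c) - A)"
    using c by (simp add: smat_def mat_def vec_eq_iff algebra_simps)
  then have "det (mat x - smat c A) = c ^ CARD('n) * det (mat (x/c) - A)" by (simp add: det_smat)
  also have "\<dots> = c ^ size (eigen_mset A) * (\<Prod>l\<in>#eigen_mset A. x / c - l)"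
    using eigen_mset_props[of A] by simp
  also have "\<dots> = (\<Prod>l\<in>#eigen_mset A. c * (x / c - l))" by (simp add: prod_mset_cmult)
  also have "\<dots> = (\<Prod>l\<in>#image_mset (\<lambda>l. c * l) (eigen_mset A). x - l)"
    using c by (simp add: image_mset.compositionality o_def algebra_simps)
  finally show "det (mat x - smat c A) = (\<Prod>l\<in>#image_mset (\<lambda>l. c * l) (eigen_mset A). x - l)" .
qed



lemma borel_measurable_Arg[measurable]: "Arg \<in> borel_measurable borel"
proof -
  let ?A = "- \<real>\<^sub>\<le>\<^sub>0 :: complex set"
  have eq: "Arg = (\<lambda>z. if z \<in> ?A then Arg z else (if z = 0 then 0 else pi))"
  proof
    fix z :: complex
    show "Arg z = (if z \<in> ?A then Arg z else (if z = 0 then 0 else pi))"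
    proof (cases "z \<in> ?A")
      case False
      then have "z \<in> \<real>" "Re z \<le> 0" by (auto simp: nonpos_Reals_def)
      then show ?thesis using False
        by (cases "z = 0") (auto simp: Arg_real complex_eq_iff complex_is_Real_iff)
    qed simp
  qed
  have op: "?A \<in> sets borel" by (intro borel_open) (simp add: open_Compl)
  have "(\<lambda>z. if z \<in> ?A then Arg z else (if z = 0 then 0 else pi)) \<in> borel_measurable borel"
  proof (subst measurable_If_restrict_space_iff)
    show "{x \<in> space borel. x \<in> ?A} \<in> sets borel" using op by (simp add: Compl_eq)
    have "Arg \<in> borel_measurable (restrict_space borel ?A)"
      by (intro borel_measurable_continuous_on_restrict continuous_on_Arg)
    moreover have "(\<lambda>z. if z = 0 then 0 else pi) \<in> borel_measurable (restrict_space borel {x. x \<notin> ?A})"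
      by (intro measurable_restrict_space1) measurable
    ultimately show "Arg \<in> borel_measurable (restrict_space borel {x. x \<in> ?A}) \<and>
      (\<lambda>z. if z = 0 then 0 else pi) \<in> borel_measurable (restrict_space borel {x. x \<notin> ?A})"
      by (simp add: Compl_eq[symmetric])
  qed
  then show ?thesis using eq by simp
qed

lemma borel_measurable_arg02pi[measurable]: "arg02pi \<in> borel_measurable borel"
  unfolding arg02pi_def by measurable

lemma borel_measurable_circ_dist[measurable]:
  "(\<lambda>p::complex\<times>complex. circ_dist (fst p) (snd p)) \<in> borel_measurable borel"
proof -
  have m: "(\<lambda>p::complex\<times>complex. fst p * cnj (snd p)) \<in> borel_measurable borel"
    by (intro borel_measurable_continuous_onI continuous_intros)
  have "(\<lambda>p::complex\<times>complex. arg02pi (fst p * cnj (snd p))) \<in> borel_measurable borel"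
    using measurable_compose[OF m borel_measurable_arg02pi] by simp
  then show ?thesis unfolding circ_dist_def by measurable
qed

lemma circ_dist_rot:
  assumes "norm c = 1"
  shows "circ_dist (c * z) (c * w) = circ_dist z w"
proof -
  have c1: "c * cnj c = 1" using assms by (metis complex_norm_square norm_one of_real_1 power_one)
  have "c * z * cnj (c * w) = (c * cnj c) * (z * cnj w)" by (simp add: algebra_simps)
  also have "\<dots> = z * cnj w" using c1 by simp
  finally have e: "c * z * cnj (c * w) = z * cnj w" .
  show ?thesis unfolding circ_dist_def e ..
qed



lemma cis_add_2pi: "cis (t + 2 * pi) = cis t"
  by (simp add: cis.ctr complex_eq_iff)

lemma lborel_translate:
  assumes "X \<in> sets borel"
  shows "emeasure lborel ((\<lambda>t. a + t) -` X) = emeasure lborel (X::real set)"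
proof -
  have "emeasure lborel X = emeasure (distr lborel borel ((+) a)) X" by (simp add: lborel_distr_plus)
  also have "\<dots> = emeasure lborel ((+) a -` X \<inter> space lborel)"
    by (rule emeasure_distr) (use assms in auto)
  finally show ?thesis by simp
qed

lemma lborel_periodic_shift:
  fixes B :: "real set"
  assumes B: "B \<in> sets borel" and per: "\<And>t. t \<in> B \<longleftrightarrow> t + 2 * pi \<in> B"
    and a: "0 \<le> a" "a \<le> 2 * pi"
  shows "emeasure lborel ({0..<2*pi} \<inter> {t. a + t \<in> B}) = emeasure lborel ({0..<2*pi} \<inter> B)"
proof -
  have "{0..<2*pi} \<inter> {t. a + t \<in> B} = (\<lambda>t. a + t) -` ({a..<a+2*pi} \<inter> B)" by auto
  then have 1: "emeasure lborel ({0..<2*pi} \<inter> {t. a + t \<in> B}) = emeasure lborel ({a..<a+2*pi} \<inter> B)"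
    using lborel_translate[of "{a..<a+2*pi} \<inter> B" a] B by simp
  have "{a..<a+2*pi} \<inter> B = ({a..<2*pi} \<inter> B) \<union> ({2*pi..<2*pi+a} \<inter> B)" using a by auto
  moreover have "emeasure lborel ({a..<2*pi} \<inter> B) + emeasure lborel ({2*pi..<2*pi+a} \<inter> B) = emeasure lborel (({a..<2*pi} \<inter> B) \<union> ({2*pi..<2*pi+a} \<inter> B))"
    by (rule plus_emeasure) (use B in auto)
  ultimately have 2: "emeasure lborel ({a..<a+2*pi} \<inter> B) = emeasure lborel ({a..<2*pi} \<inter> B) + emeasure lborel ({2*pi..<2*pi+a} \<inter> B)"
    by simp
  have "{0..<a} \<inter> B = (\<lambda>t. 2*pi + t) -` ({2*pi..<2*pi+a} \<inter> B)"
    using per by (auto simp: add.commute)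
  then have 3: "emeasure lborel ({2*pi..<2*pi+a} \<inter> B) = emeasure lborel ({0..<a} \<inter> B)"
    using lborel_translate[of "{2*pi..<2*pi+a} \<inter> B" "2*pi"] B by simp
  have "{0..<2*pi} \<inter> B = ({0..<a} \<inter> B) \<union> ({a..<2*pi} \<inter> B)" using a by auto
  moreover have "emeasure lborel ({0..<a} \<inter> B) + emeasure lborel ({a..<2*pi} \<inter> B) = emeasure lborel (({0..<a} \<inter> B) \<union> ({a..<2*pi} \<inter> B))"
    by (rule plus_emeasure) (use B in auto)
  ultimately have 4: "emeasure lborel ({0..<2*pi} \<inter> B) = emeasure lborel ({0..<a} \<inter> B) + emeasure lborel ({a..<2*pi} \<inter> B)"
    by simp
  show ?thesis using 1 2 3 4 by (simp add: add.commute)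
qed

lemma emeasure_lambda_T:
  assumes S: "S \<in> sets borel"
  shows "emeasure lambda_T S = emeasure lborel ({0..<2*pi} \<inter> cis -` S) / ennreal (2*pi)"
proof -
  let ?U = "uniform_measure lborel {0..<2*pi}"
  have m: "cis \<in> measurable ?U borel"
    by (simp add: measurable_cong_sets[OF sets_uniform_measure refl] borel_measurable_continuous_onI continuous_on_cis continuous_on_id)
  have "emeasure lambda_T S = emeasure ?U (cis -` S \<inter> space ?U)"
    unfolding lambda_T_def by (rule emeasure_distr[OF m S])
  also have "\<dots> = emeasure lborel ({0..<2*pi} \<inter> cis -` S) / emeasure lborel {0..<2*pi}"
  proof -
    have "cis -` S \<in> sets lborel"
      using measurable_sets_borel[OF _ S, of cis] by (simp add: borel_measurable_continuous_onI continuous_on_cis continuous_on_id)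
    then show ?thesis by simp
  qed
  finally show ?thesis by simp
qed

lemma arg02pi_props: "0 \<le> arg02pi z \<and> arg02pi z \<le> 2 * pi \<and> cis (arg02pi z) = cis (Arg z)"
  using Arg_bounded[of z] unfolding arg02pi_def by (auto simp: cis_add_2pi)

lemma lambda_T_rot:
  assumes c: "norm c = 1" and S: "S \<in> sets borel"
  shows "emeasure lambda_T ((\<lambda>z. c * z) -` S) = emeasure lambda_T S"
proof -
  define a where "a = arg02pi c"
  have a: "0 \<le> a" "a \<le> 2*pi" and ca: "cis a = c"
  proof -
    have "c \<noteq> 0" using c by auto
    then have "cis (Arg c) = c" using c by (simp add: cis_Arg sgn_eq)
    then show "0 \<le> a" "a \<le> 2*pi" "cis a = c" using arg02pi_props[of c] unfolding a_def by auto
  qed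
  have S': "(\<lambda>z. c * z) -` S \<in> sets borel"
    using S by (intro measurable_sets_borel[OF _ S]) measurable
  define B where "B = cis -` S"
  have B: "B \<in> sets borel" unfolding B_def
    by (rule measurable_sets_borel[OF _ S]) (intro borel_measurable_continuous_onI continuous_on_cis continuous_on_id)
  have per: "t \<in> B \<longleftrightarrow> t + 2 * pi \<in> B" for t unfolding B_def by (simp add: cis_add_2pi)
  have "cis -` ((\<lambda>z. c * z) -` S) = {t. a + t \<in> B}"
    unfolding B_def by (auto simp: ca[symmetric] cis_mult)
  then show ?thesis
    using emeasure_lambda_T[OF S] emeasure_lambda_T[OF S'] lborel_periodic_shift[OF B per a]
    by (simp add: B_def)
qed



definition rotp :: "complex \<Rightarrow> complex \<times> complex \<Rightarrow> complex \<times> complex" where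
  "rotp c p = (c * fst p, c * snd p)"

definition wcost :: "real \<Rightarrow> (complex \<times> complex) measure \<Rightarrow> ennreal" where
  "wcost p \<theta> = (\<integral>\<^sup>+ zw. ennreal (circ_dist (fst zw) (snd zw) powr p) \<partial>\<theta>)"

lemma rotp_meas: "rotp c \<in> borel_measurable borel"
  unfolding rotp_def by (intro borel_measurable_continuous_onI continuous_intros)

lemma times_borel:
  fixes S T :: "complex set"
  assumes "S \<in> sets borel" "T \<in> sets borel"
  shows "S \<times> T \<in> sets (borel :: (complex \<times> complex) measure)"
proof -
  have "S \<times> T \<in> sets (borel \<Otimes>\<^sub>M borel)" by (rule pair_measureI) (use assms in auto)
  then show ?thesis unfolding borel_prod .
qed

lemma coupling_rot:
  assumes c: "norm c = 1" and th: "\<theta> \<in> couplings (measure_pmf q) lambda_T"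
  shows "distr \<theta> borel (rotp c) \<in> couplings (measure_pmf (map_pmf (\<lambda>z. c * z) q)) lambda_T"
    and "wcost p (distr \<theta> borel (rotp c)) = wcost p \<theta>"
proof -
  have sth: "sets \<theta> = sets borel" and pth: "prob_space \<theta>"
    and marg: "\<And>S. S \<in> sets borel \<Longrightarrow> emeasure \<theta> (S \<times> UNIV) = emeasure (measure_pmf q) S \<and> emeasure \<theta> (UNIV \<times> S) = emeasure lambda_T S"
    using th unfolding couplings_def by auto
  have spth: "space \<theta> = UNIV" using sets_eq_imp_space_eq[OF sth] by simp
  have Rm: "rotp c \<in> measurable \<theta> borel"
    using rotp_meas measurable_cong_sets[OF sth refl] by blast
  have cm: "(\<lambda>z. c * z) -` S \<in> sets borel" if "S \<in> sets borel" for S :: "complex set"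
    by (rule measurable_sets_borel[OF _ that]) measurable
  show "distr \<theta> borel (rotp c) \<in> couplings (measure_pmf (map_pmf (\<lambda>z. c * z) q)) lambda_T"
    unfolding couplings_def
  proof (intro CollectI conjI ballI)
    show "sets (distr \<theta> borel (rotp c)) = sets borel" by simp
    show "prob_space (distr \<theta> borel (rotp c))" by (rule prob_space.prob_space_distr[OF pth Rm])
    fix S :: "complex set" assume S: "S \<in> sets borel"
    have "emeasure (distr \<theta> borel (rotp c)) (S \<times> UNIV) = emeasure \<theta> (rotp c -` (S \<times> UNIV) \<inter> space \<theta>)"
      by (rule emeasure_distr[OF Rm]) (rule times_borel[OF S], simp)
    also have "rotp c -` (S \<times> UNIV) \<inter> space \<theta> = ((\<lambda>z. c * z) -` S) \<times> UNIV"
      unfolding spth rotp_def by auto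
    also have "emeasure \<theta> \<dots> = emeasure (measure_pmf q) ((\<lambda>z. c * z) -` S)"
      using marg[OF cm[OF S]] by simp
    also have "\<dots> = emeasure (measure_pmf (map_pmf (\<lambda>z. c * z) q)) S" by simp
    finally show "emeasure (distr \<theta> borel (rotp c)) (S \<times> UNIV) = emeasure (measure_pmf (map_pmf (\<lambda>z. c * z) q)) S" .
    have "emeasure (distr \<theta> borel (rotp c)) (UNIV \<times> S) = emeasure \<theta> (rotp c -` (UNIV \<times> S) \<inter> space \<theta>)"
      by (rule emeasure_distr[OF Rm]) (rule times_borel[OF _ S], simp)
    also have "rotp c -` (UNIV \<times> S) \<inter> space \<theta> = UNIV \<times> ((\<lambda>z. c * z) -` S)"
      unfolding spth rotp_def by auto
    also have "emeasure \<theta> \<dots> = emeasure lambda_T ((\<lambda>z. c * z) -` S)"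
      using marg[OF cm[OF S]] by simp
    also have "\<dots> = emeasure lambda_T S" by (rule lambda_T_rot[OF c S])
    finally show "emeasure (distr \<theta> borel (rotp c)) (UNIV \<times> S) = emeasure lambda_T S" .
  qed
  have gm: "(\<lambda>zw. ennreal (circ_dist (fst zw) (snd zw) powr p)) \<in> borel_measurable borel"
    by measurable
  have gm': "(\<lambda>zw. ennreal (circ_dist (fst zw) (snd zw) powr p)) \<in> borel_measurable (distr \<theta> borel (rotp c))"
    using gm by (subst measurable_cong_sets[where M'=borel and N'=borel]) simp_all
  show "wcost p (distr \<theta> borel (rotp c)) = wcost p \<theta>"
    unfolding wcost_def
    by (subst nn_integral_distr[OF Rm gm']) (simp add: rotp_def circ_dist_rot[OF c])
qed

lemma wass_INF_rot_le:
  assumes c: "norm c = 1"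
  shows "(INF \<theta>\<in>couplings (measure_pmf (map_pmf (\<lambda>z. c * z) q)) lambda_T. wcost p \<theta>)
      \<le> (INF \<theta>\<in>couplings (measure_pmf q) lambda_T. wcost p \<theta>)"
proof (rule INF_mono)
  fix \<theta> assume "\<theta> \<in> couplings (measure_pmf q) lambda_T"
  then show "\<exists>\<theta>'\<in>couplings (measure_pmf (map_pmf (\<lambda>z. c * z) q)) lambda_T. wcost p \<theta>' \<le> wcost p \<theta>"
    using coupling_rot[OF c] by (metis order_refl)
qed

lemma wasserstein_rot:
  assumes c: "norm c = 1"
  shows "wasserstein p (measure_pmf (map_pmf (\<lambda>z. c * z) q)) lambda_T = wasserstein p (measure_pmf q) lambda_T"
proof -
  have c': "norm (cnj c) = 1" using c by simp
  have cc: "cnj c * c = 1" using c by (metis complex_norm_square mult.commute norm_one of_real_1 power_one)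
  have "map_pmf (\<lambda>z. cnj c * z) (map_pmf (\<lambda>z. c * z) q) = q"
    by (simp add: map_pmf_comp mult.assoc[symmetric] cc)
  then have "(INF \<theta>\<in>couplings (measure_pmf q) lambda_T. wcost p \<theta>)
      \<le> (INF \<theta>\<in>couplings (measure_pmf (map_pmf (\<lambda>z. c * z) q)) lambda_T. wcost p \<theta>)"
    using wass_INF_rot_le[OF c', where q="map_pmf (\<lambda>z. c * z) q" and p=p] by simp
  then have "(INF \<theta>\<in>couplings (measure_pmf (map_pmf (\<lambda>z. c * z) q)) lambda_T. wcost p \<theta>)
      = (INF \<theta>\<in>couplings (measure_pmf q) lambda_T. wcost p \<theta>)"
    using wass_INF_rot_le[OF c, where q=q and p=p] by (rule antisym[rotated])
  then show ?thesis unfolding wasserstein_def wcost_def by simp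
qed



lemma continuous_det: "continuous_on UNIV (det :: ('a::real_normed_field^'n^'n) \<Rightarrow> 'a)"
  unfolding det_def by (intro continuous_intros)

lemma conj_transpose_mul: "conj_transpose (A ** B) = conj_transpose B ** conj_transpose A"
  by (simp add: conj_transpose_def matrix_matrix_mult_def vec_eq_iff mult.commute)

lemma conj_transpose_conj_transpose[simp]: "conj_transpose (conj_transpose A) = A"
  by (simp add: conj_transpose_def vec_eq_iff)

lemma det_conj_transpose: "det (conj_transpose A) = cnj (det A)"
proof -
  have "conj_transpose A = transpose (\<chi> i j. cnj (A$i$j))"
    by (simp add: conj_transpose_def transpose_def vec_eq_iff)
  then have "det (conj_transpose A) = det (\<chi> i j. cnj (A$i$j))" by simp
  also have "\<dots> = cnj (det A)" unfolding det_def by (simp add: cnj_sum cnj_prod)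
  finally show ?thesis .
qed

lemma continuous_conj_transpose: "continuous_on UNIV (conj_transpose :: complex^'n^'n \<Rightarrow> _)"
  unfolding conj_transpose_def by (intro continuous_intros)

lemma continuous_transpose: "continuous_on UNIV (transpose :: 'a::real_normed_vector^'n^'n \<Rightarrow> _)"
  unfolding transpose_def by (intro continuous_intros)

lemma unitary_mul: "A \<in> unitary_group \<Longrightarrow> B \<in> unitary_group \<Longrightarrow> A ** B \<in> unitary_group"
proof -
  assume a: "A \<in> unitary_group" and b: "B \<in> unitary_group"
  have "(A ** B) ** conj_transpose (A ** B) = A ** (B ** conj_transpose B) ** conj_transpose A"
    by (simp add: conj_transpose_mul matrix_mul_assoc)
  also have "\<dots> = mat 1" using a b by (simp add: unitary_group_def)
  finally show ?thesis by (simp add: unitary_group_def)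
qed

lemma unitary_inv: "A \<in> unitary_group \<Longrightarrow> conj_transpose A \<in> unitary_group"
  unfolding unitary_group_def using matrix_left_right_inverse by auto

lemma unitary_det: "A \<in> unitary_group \<Longrightarrow> norm (det A) = 1"
proof -
  assume a: "A \<in> unitary_group"
  have "det A * cnj (det A) = 1"
    using arg_cong[OF a[unfolded unitary_group_def, simplified], of det]
    by (simp add: det_mul det_conj_transpose)
  then have "norm (det A) ^ 2 = 1" by (metis complex_norm_square norm_one of_real_eq_1_iff)
  then show ?thesis using norm_ge_zero[of "det A"] by (auto simp: power2_eq_1_iff)
qed

lemma SU_mul: "A \<in> special_unitary_group \<Longrightarrow> B \<in> special_unitary_group \<Longrightarrow> A ** B \<in> special_unitary_group"
  using unitary_mul[of A B] by (auto simp: special_unitary_group_def unitary_group_def det_mul)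

lemma SU_inv: "A \<in> special_unitary_group \<Longrightarrow> conj_transpose A \<in> special_unitary_group"
  using unitary_inv[of A] by (auto simp: special_unitary_group_def unitary_group_def det_conj_transpose)

lemma SU_sub: "special_unitary_group \<subseteq> unitary_group"
  by (auto simp: special_unitary_group_def unitary_group_def)

lemma smat_mul_conj: "smat c A ** conj_transpose (smat c A) = smat (c * cnj c) (A ** conj_transpose A)"
  by (simp add: smat_def conj_transpose_def matrix_matrix_mult_def vec_eq_iff sum_distrib_left algebra_simps)

lemma mul_smat: "g ** smat c A = smat c (g ** A)"
  by (simp add: smat_def matrix_matrix_mult_def vec_eq_iff sum_distrib_left algebra_simps)

lemma smat_1[simp]: "smat 1 A = A"
  by (simp add: smat_def vec_eq_iff)

lemma smat_unitary: "norm c = 1 \<Longrightarrow> A \<in> unitary_group \<Longrightarrow> smat c A \<in> unitary_group"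
proof -
  assume c: "norm c = 1" and A: "A \<in> unitary_group"
  have "c * cnj c = 1" using c by (metis complex_norm_square norm_one of_real_1 power_one)
  then show ?thesis using A by (simp add: unitary_group_def smat_mul_conj)
qed

definition piU :: "complex^'n^'n \<Rightarrow> complex^'n^'n" where
  "piU A = smat (cis (- Arg (det A) / real CARD('n))) A"

lemma piU_meas: "(piU :: complex^'n^'n \<Rightarrow> _) \<in> borel_measurable borel"
proof -
  have d: "(det :: complex^'n^'n \<Rightarrow> _) \<in> borel_measurable borel"
    by (rule borel_measurable_continuous_onI[OF continuous_det])
  have k: "(\<lambda>A::complex^'n^'n. cis (- Arg (det A) / real CARD('n))) \<in> borel_measurable borel"
  proof -
    have "(\<lambda>A::complex^'n^'n. Arg (det A)) \<in> borel_measurable borel"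
      using measurable_compose[OF d borel_measurable_Arg] by (simp add: o_def)
    then have "(\<lambda>A::complex^'n^'n. - Arg (det A) / real CARD('n)) \<in> borel_measurable borel"
      by measurable
    moreover have "cis \<in> borel_measurable borel"
      by (rule borel_measurable_continuous_onI) (rule continuous_on_cis[OF continuous_on_id])
    ultimately show ?thesis by (rule measurable_compose)
  qed
  have H: "continuous_on UNIV (\<lambda>x::complex \<times> (complex^'n^'n). smat (fst x) (snd x))"
    unfolding smat_def by (intro continuous_intros)
  show ?thesis unfolding piU_def
    by (rule borel_measurable_continuous_Pair[OF k _ H]) simp
qed

lemma piU_props:
  assumes A: "A \<in> (unitary_group :: (complex^'n^'n) set)"
  shows "piU A \<in> special_unitary_group" and "norm (cis (- Arg (det A) / real CARD('n))) = 1"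
proof -
  let ?c = "cis (- Arg (det A) / real CARD('n))"
  show c: "norm ?c = 1" by simp
  have d: "norm (det A) = 1" by (rule unitary_det[OF A])
  then have "det A \<noteq> 0" by auto
  then have dA: "cis (Arg (det A)) = det A" using d by (simp add: cis_Arg sgn_eq)
  have "?c ^ CARD('n) = cis (real CARD('n) * (- Arg (det A) / real CARD('n)))" by (rule Complex.DeMoivre)
  also have "real CARD('n) * (- Arg (det A) / real CARD('n)) = - Arg (det A)" by simp
  finally have "?c ^ CARD('n) = cis (- Arg (det A))" .
  then have "det (piU A) = cis (- Arg (det A)) * cis (Arg (det A))"
    unfolding piU_def det_smat using dA by simp
  also have "\<dots> = 1" by (simp add: cis_mult)
  finally show "piU A \<in> special_unitary_group"
    using smat_unitary[OF c A] unfolding piU_def special_unitary_group_def unitary_group_def by simp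
qed

lemma map_pmf_of_multiset_inj:
  assumes f: "inj f" and M: "M \<noteq> {#}"
  shows "map_pmf f (pmf_of_multiset M) = pmf_of_multiset (image_mset f M)"
proof (rule pmf_eqI)
  fix x
  have M': "image_mset f M \<noteq> {#}" using M by simp
  show "pmf (map_pmf f (pmf_of_multiset M)) x = pmf (pmf_of_multiset (image_mset f M)) x"
  proof (cases "x \<in> range f")
    case True
    then obtain y where y: "x = f y" by auto
    have "count (image_mset f M) (f y) = count M y"
    proof -
      have "f -` {f y} = {y}" using f by (auto dest: injD)
      then show ?thesis by (cases "y \<in># M") (auto simp: count_image_mset count_eq_zero_iff)
    qed
    then show ?thesis using y pmf_map_inj'[OF f] M M' by simp
  next
    case False
    have "x \<notin> set_pmf (map_pmf f (pmf_of_multiset M))" using False M by auto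
    moreover have "count (image_mset f M) x = 0" using False by (auto simp: count_eq_zero_iff)
    ultimately show ?thesis using M' by (simp add: set_pmf_eq)
  qed
qed

lemma inj_cmult: "c \<noteq> (0::complex) \<Longrightarrow> inj (\<lambda>z. c * z)"
  by (auto intro: injI)

lemma size_eigen_pos: "eigen_mset (A::complex^'n^'n) \<noteq> {#}"
proof -
  have "size (eigen_mset A) = CARD('n)" using eigen_mset_props by blast
  then show ?thesis by auto
qed

lemma specU_rot:
  assumes c: "norm c = 1"
  shows "wasserstein p (spec_measure_U (smat c (A::complex^'n^'n))) lambda_T = wasserstein p (spec_measure_U A) lambda_T"
proof -
  have c0: "c \<noteq> 0" using c by auto
  have "spec_measure_U (smat c A) = measure_pmf (map_pmf (\<lambda>z. c * z) (pmf_of_multiset (eigen_mset A)))"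
    unfolding spec_measure_U_def eigen_mset_smat[OF c0]
    by (simp add: map_pmf_of_multiset_inj[OF inj_cmult[OF c0] size_eigen_pos])
  then show ?thesis using wasserstein_rot[OF c] by (simp add: spec_measure_U_def)
qed



lemma part_U:
  fixes MU MSU :: "(complex^'n^'n) measure"
  assumes hU: "haar_measure_on unitary_group MU" and hSU: "haar_measure_on special_unitary_group MSU"
  shows "distr MU borel (\<lambda>A. wasserstein p (spec_measure_U A) lambda_T)
           = distr MSU borel (\<lambda>A. wasserstein p (spec_measure_U A) lambda_T)"
proof (rule haar_transfer[OF hU hSU _ SU_sub SU_mul unitary_mul])
  show "\<And>M. haar_measure_on special_unitary_group M \<Longrightarrow> M = MSU"
    by (rule haar_unique[OF SU_mul SU_inv conj_transpose_mul conj_transpose_conj_transpose continuous_conj_transpose hSU])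
  show "piU \<in> restrict_space borel unitary_group \<rightarrow>\<^sub>M restrict_space borel special_unitary_group"
    by (rule measurable_restrict_space3[OF piU_meas]) (use piU_props(1) in auto)
  show "piU A = A" if "A \<in> special_unitary_group" for A :: "complex^'n^'n"
    using that by (simp add: piU_def special_unitary_group_def)
  show "piU (g ** A) = g ** piU A" if "g \<in> special_unitary_group" "A \<in> unitary_group" for g A :: "complex^'n^'n"
    using that by (simp add: piU_def special_unitary_group_def det_mul mul_smat)
  show "wasserstein p (spec_measure_U (piU A)) lambda_T = wasserstein p (spec_measure_U A) lambda_T"
    if "A \<in> unitary_group" for A :: "complex^'n^'n"
    unfolding piU_def by (rule specU_rot[OF piU_props(2)[OF that]])
qed



definition rscale :: "real \<Rightarrow> real^'n^'n \<Rightarrow> real^'n^'n" where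
  "rscale c A = (\<chi> i j. c * A$i$j)"

lemma det_rscale: "det (rscale c (A::real^'n^'n)) = c ^ CARD('n) * det A"
  unfolding det_def rscale_def
  by (simp add: sum_distrib_left prod.distrib mult.left_commute)

lemma rscale_tt: "transpose (rscale c A) ** rscale c A = rscale (c * c) (transpose A ** A)"
  by (simp add: rscale_def transpose_def matrix_matrix_mult_def vec_eq_iff sum_distrib_left algebra_simps)

lemma mul_rscale: "g ** rscale c A = rscale c (g ** A)"
  by (simp add: rscale_def matrix_matrix_mult_def vec_eq_iff sum_distrib_left algebra_simps)

lemma rscale_1[simp]: "rscale 1 A = A"
  by (simp add: rscale_def vec_eq_iff)

lemma complexify_rscale: "complexify (rscale r A) = smat (complex_of_real r) (complexify A)"
  by (simp add: rscale_def smat_def complexify_def vec_eq_iff)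

lemma orth_mul: "A \<in> orthogonal_group \<Longrightarrow> B \<in> orthogonal_group \<Longrightarrow> A ** B \<in> orthogonal_group"
proof -
  assume a: "A \<in> orthogonal_group" and b: "B \<in> orthogonal_group"
  have "transpose (A ** B) ** (A ** B) = transpose B ** (transpose A ** A) ** B"
    by (simp add: matrix_transpose_mul matrix_mul_assoc)
  also have "\<dots> = mat 1" using a b by (simp add: orthogonal_group_def)
  finally show ?thesis by (simp add: orthogonal_group_def)
qed

lemma orth_inv: "A \<in> orthogonal_group \<Longrightarrow> transpose A \<in> orthogonal_group"
  unfolding orthogonal_group_def using matrix_left_right_inverse by auto

lemma orth_det: "A \<in> orthogonal_group \<Longrightarrow> det A = 1 \<or> det A = -1"
proof -
  assume a: "A \<in> orthogonal_group"
  have "det A * det A = 1"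
    using arg_cong[OF a[unfolded orthogonal_group_def, simplified], of det]
    by (simp add: det_mul)
  then show ?thesis by (metis power2_eq_1_iff power2_eq_square)
qed

lemma SO_mul: "A \<in> special_orthogonal_group \<Longrightarrow> B \<in> special_orthogonal_group \<Longrightarrow> A ** B \<in> special_orthogonal_group"
  using orth_mul[of A B] by (auto simp: special_orthogonal_group_def orthogonal_group_def det_mul)

lemma SO_inv: "A \<in> special_orthogonal_group \<Longrightarrow> transpose A \<in> special_orthogonal_group"
  using orth_inv[of A] by (auto simp: special_orthogonal_group_def orthogonal_group_def)

lemma SO_sub: "special_orthogonal_group \<subseteq> orthogonal_group"
  by (auto simp: special_orthogonal_group_def orthogonal_group_def)

definition piO :: "real^'n^'n \<Rightarrow> real^'n^'n" where
  "piO A = rscale (det A) A"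

lemma piO_meas: "(piO :: real^'n^'n \<Rightarrow> _) \<in> borel_measurable borel"
proof -
  have d: "(det :: real^'n^'n \<Rightarrow> _) \<in> borel_measurable borel"
    by (rule borel_measurable_continuous_onI[OF continuous_det])
  have H: "continuous_on UNIV (\<lambda>x::real \<times> (real^'n^'n). rscale (fst x) (snd x))"
    unfolding rscale_def by (intro continuous_intros)
  show ?thesis unfolding piO_def
    by (rule borel_measurable_continuous_Pair[OF d _ H]) simp
qed

lemma piO_SO:
  assumes A: "A \<in> (orthogonal_group :: (real^'n^'n) set)" and odd: "odd CARD('n)"
  shows "piO A \<in> special_orthogonal_group" and "det A = -1 \<Longrightarrow> det (piO A) = 1"
proof -
  have d: "det A = 1 \<or> det A = -1" by (rule orth_det[OF A])
  have dd: "det A * det A = 1" using d by auto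
  have "det (piO A) = det A ^ CARD('n) * det A" unfolding piO_def by (rule det_rscale)
  also have "\<dots> = det A ^ (CARD('n) + 1)" by simp
  also have "\<dots> = 1" using d odd by auto
  finally have det1: "det (piO A) = 1" .
  then show "det A = -1 \<Longrightarrow> det (piO A) = 1" .
  show "piO A \<in> special_orthogonal_group"
    using det1 A dd unfolding special_orthogonal_group_def orthogonal_group_def piO_def
    by (simp add: rscale_tt)
qed

lemma image_mset_diff_single:
  assumes "inj f"
  shows "image_mset f (M - {#a#}) = image_mset f M - {#f a#}"
  using image_mset_diff_if_inj[OF assms, of M "{#a#}"] by simp

lemma specO_piO:
  assumes A: "A \<in> (orthogonal_group :: (real^'n^'n) set)" and odd: "odd CARD('n)" and two: "2 \<le> CARD('n)"
  shows "wasserstein p (spec_measure_O (piO A)) lambda_T = wasserstein p (spec_measure_O A) lambda_T"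
proof (cases "det A = 1")
  case True
  then show ?thesis by (simp add: piO_def)
next
  case False
  then have dA: "det A = -1" using orth_det[OF A] by auto
  define E where "E = eigen_mset (complexify A)"
  have c0: "(-1::complex) \<noteq> 0" by simp
  have inj: "inj (\<lambda>z::complex. (-1) * z)" by (rule inj_cmult[OF c0])
  have sz: "size E = CARD('n)" unfolding E_def using eigen_mset_props by blast
  have ne: "E - {#-1#} \<noteq> {#}"
  proof -
    have "size E - 1 \<le> size (E - {#-1#})"
      by (cases "-1 \<in># E") (auto simp: size_Diff_singleton)
    then show ?thesis using sz two by auto
  qed
  have "complexify (piO A) = smat (-1) (complexify A)"
    unfolding piO_def dA complexify_rscale by simp
  then have "eigen_mset (complexify (piO A)) = image_mset (\<lambda>z. (-1) * z) E"
    unfolding E_def by (simp add: eigen_mset_smat[OF c0])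
  moreover have "det (piO A) = 1" using piO_SO(2)[OF A odd dA] .
  moreover have "image_mset (\<lambda>z. (-1) * z) (E - {#-1#}) = image_mset (\<lambda>z. (-1) * z) E - {#1#}"
    using image_mset_diff_single[OF inj, of E "-1"] by simp
  ultimately have "eigen_mset (complexify (piO A)) - {#complex_of_real (det (piO A))#}
      = image_mset (\<lambda>z. (-1) * z) (E - {#-1#})"
    by simp
  then have "spec_measure_O (piO A) = measure_pmf (map_pmf (\<lambda>z. (-1) * z) (pmf_of_multiset (E - {#-1#})))"
    unfolding spec_measure_O_def using map_pmf_of_multiset_inj[OF inj ne] by simp
  moreover have "spec_measure_O A = measure_pmf (pmf_of_multiset (E - {#-1#}))"
    unfolding spec_measure_O_def E_def dA by simp
  ultimately show ?thesis using wasserstein_rot[of "-1" p "pmf_of_multiset (E - {#-1#})"] by simp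
qed



lemma part_O:
  fixes MO MSO :: "(real^'m^'m) measure"
  assumes hO: "haar_measure_on orthogonal_group MO" and hSO: "haar_measure_on special_orthogonal_group MSO"
    and odd: "odd CARD('m)" and two: "2 \<le> CARD('m)"
  shows "distr MO borel (\<lambda>A. wasserstein p (spec_measure_O A) lambda_T)
           = distr MSO borel (\<lambda>A. wasserstein p (spec_measure_O A) lambda_T)"
proof -
  have uniq: "\<And>M. haar_measure_on special_orthogonal_group M \<Longrightarrow> M = MSO"
    by (rule haar_unique[OF SO_mul SO_inv matrix_transpose_mul transpose_transpose continuous_transpose hSO])
  have pm: "(piO :: real^'m^'m \<Rightarrow> _) \<in> orthogonal_group \<rightarrow> special_orthogonal_group"
  proof
    fix A :: "real^'m^'m" assume "A \<in> orthogonal_group"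
    then show "piO A \<in> special_orthogonal_group" by (rule piO_SO(1)[OF _ odd])
  qed
  have pim: "(piO :: real^'m^'m \<Rightarrow> _) \<in> restrict_space borel orthogonal_group \<rightarrow>\<^sub>M restrict_space borel special_orthogonal_group"
    by (rule measurable_restrict_space3[OF piO_meas pm])
  have piG: "piO A = A" if "A \<in> special_orthogonal_group" for A :: "real^'m^'m"
    using that by (simp add: piO_def special_orthogonal_group_def)
  have pieq: "piO (g ** A) = g ** piO A" if "g \<in> special_orthogonal_group" "A \<in> orthogonal_group" for g A :: "real^'m^'m"
    using that by (simp add: piO_def special_orthogonal_group_def det_mul mul_rscale)
  have fpi: "wasserstein p (spec_measure_O (piO A)) lambda_T = wasserstein p (spec_measure_O A) lambda_T"
    if "A \<in> orthogonal_group" for A :: "real^'m^'m"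
    by (rule specO_piO[OF that odd two])
  show ?thesis
    by (rule haar_transfer[where f="\<lambda>A. wasserstein p (spec_measure_O A) lambda_T", OF hO hSO uniq SO_sub SO_mul orth_mul pim piG pieq fpi])
qed

theorem lemma3:
  fixes p :: real and N :: nat
    and MU :: "(complex^'n^'n) measure" and MSU :: "(complex^'n^'n) measure"
    and MO :: "(real^'m^'m) measure" and MSO :: "(real^'m^'m) measure"
  assumes "1 \<le> p" and "1 \<le> N"
    and "CARD('n) = N" and "CARD('m) = 2 * N + 1"
    and "haar_measure_on unitary_group MU"
    and "haar_measure_on special_unitary_group MSU"
    and "haar_measure_on orthogonal_group MO"
    and "haar_measure_on special_orthogonal_group MSO"
  shows "distr MU borel (\<lambda>A. wasserstein p (spec_measure_U A) lambda_T)
           = distr MSU borel (\<lambda>A. wasserstein p (spec_measure_U A) lambda_T)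
       \<and> distr MO borel (\<lambda>A. wasserstein p (spec_measure_O A) lambda_T)
           = distr MSO borel (\<lambda>A. wasserstein p (spec_measure_O A) lambda_T)"
proof
  show "distr MU borel (\<lambda>A. wasserstein p (spec_measure_U A) lambda_T)
           = distr MSU borel (\<lambda>A. wasserstein p (spec_measure_U A) lambda_T)"
    by (rule part_U) fact+
  have "odd CARD('m)" "2 \<le> CARD('m)" using assms(2,4) by auto
  then show "distr MO borel (\<lambda>A. wasserstein p (spec_measure_O A) lambda_T)
           = distr MSO borel (\<lambda>A. wasserstein p (spec_measure_O A) lambda_T)"
    by (intro part_O assms(7,8))
qed

end
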